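(* Let $n\ge3$ and let $\phi_1(x),\dots,\phi_{2n-2}(x)$ be (nonvanishing) functions of $x$. Let $K$ be the symmetric $2n\times 2n$ matrix, rows and columns indexed $0,\dots,2n-1$, whose only nonzero entries are $K_{k,2n-1-k}=(-1)^{\min(k,\,2n-1-k)}$. Let $\tilde F(x)$ be the vector of $2n$ functions with entries (indexed $0,\dots,2n-1$) $$\tilde F_k=\mathcal I(1,\dots,k)\ (0\le k\le n-2),\quad \tilde F_{n-1}=\mathcal I(1,\dots,n-2,n-1),\quad \tilde F_n=\mathcal I(1,\dots,n-2,n),$$ $$\tilde F_{n+1+m}=\mathcal I(1,\dots,n-2,n-1,n,n+1,\dots,n+m)+\mathcal I(1,\dots,n-2,n,n-1,n+1,\dots,n+m)\quad(0\le m\le n-2).$$ Let $f_0(x)=\big(\prod_{i=1}^{2n-2}\phi_i(x)\big)^{-1/2}$ and $F=f_0\tilde F$. Let $s$ be the permutation of $\{1,\dots,2n-2\}$ with $s(i)=2n-1-i$ for $i\le n-2$ and $i\ge n+1$, $s(n-1)=n-1$, $s(n)=n$, and let $s$ also denote the substitution $\phi_a\mapsto\phi_{s(a)}$ applied to expressions in the $\phi_a$, their derivatives and iterated integrals (componentwise on vectors). Then $$F^{(i)}K(sF^{(j)})^T=0\quad\text{for } 0\le i,j\le n-1 \text{ with } i+j<2n-2,$$ $$F^{(n-1)}K(sF^{(n-1)})^T=2(-1)^{n-1}.$$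
   Context: $F^{(i)}$ denotes the componentwise $i$-th derivative. Iterated integrals: $\mathcal I(a_1\cdots a_k)(x)=\int_0^x\phi_{a_1}(x_1)\,dx_1\int_0^{x_1}\phi_{a_2}(x_2)\,dx_2\cdots\int_0^{x_{k-1}}\phi_{a_k}(x_k)\,dx_k$ with $\mathcal I(\varnothing)=1$ (so $\tilde F_0=1$). *)

theory Defs
  imports "HOL-Analysis.Analysis"
begin

definition vderiv :: "(real \<Rightarrow> complex) \<Rightarrow> real \<Rightarrow> complex" where
  "vderiv f = (\<lambda>x. vector_derivative f (at x))"

definition hderiv :: "nat \<Rightarrow> (real \<Rightarrow> complex) \<Rightarrow> real \<Rightarrow> complex" where
  "hderiv k f = (vderiv ^^ k) f"

definition oint :: "(real \<Rightarrow> complex) \<Rightarrow> real \<Rightarrow> complex" where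
  "oint g x = (if 0 \<le> x then integral {0..x} g else - integral {x..0} g)"

fun iint :: "(nat \<Rightarrow> real \<Rightarrow> complex) \<Rightarrow> nat list \<Rightarrow> real \<Rightarrow> complex" where
  "iint \<phi> [] x = 1"
| "iint \<phi> (a # as) x = oint (\<lambda>t. \<phi> a t * iint \<phi> as t) x"

definition Ftil :: "nat \<Rightarrow> (nat \<Rightarrow> real \<Rightarrow> complex) \<Rightarrow> nat \<Rightarrow> real \<Rightarrow> complex" where
  "Ftil n \<phi> k =
    (if k \<le> n - 2 then iint \<phi> [1..<k+1]
     else if k = n - 1 then iint \<phi> ([1..<n-1] @ [n-1])
     else if k = n then iint \<phi> ([1..<n-1] @ [n])
     else (let m = k - (n + 1) in
       (\<lambda>x. iint \<phi> ([1..<n-1] @ [n-1, n] @ [n+1..<n+m+1]) x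
          + iint \<phi> ([1..<n-1] @ [n, n-1] @ [n+1..<n+m+1]) x)))"

definition sperm :: "nat \<Rightarrow> nat \<Rightarrow> nat" where
  "sperm n i = (if i = n - 1 \<or> i = n then i
                else if 1 \<le> i \<and> i \<le> 2*n - 2 then 2*n - 1 - i else i)"

text \<open>Entry K_{k,2n-1-k} of the antidiagonal matrix K.\<close>
definition Kentry :: "nat \<Rightarrow> nat \<Rightarrow> complex" where
  "Kentry n k = (-1) ^ (min k (2*n - 1 - k))"

end

theory Submission
  imports Defs
begin


lemma hderiv_0[simp]: "hderiv 0 f = f" by (simp add: hderiv_def)
lemma hderiv_Suc: "hderiv (Suc k) f = vderiv (hderiv k f)" by (simp add: hderiv_def)
lemma hderiv_Suc': "hderiv (Suc k) f = hderiv k (vderiv f)"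
  by (simp add: hderiv_def funpow_Suc_right del: funpow.simps)

lemma vderiv_eq: "(f has_vector_derivative D) (at x) \<Longrightarrow> vderiv f x = D"
  by (simp add: vderiv_def vector_derivative_at)

lemma vderiv_works: "f differentiable (at x) \<Longrightarrow> (f has_vector_derivative vderiv f x) (at x)"
  by (simp add: vderiv_def vector_derivative_works[symmetric])

lemma oint_deriv:
  fixes g :: "real \<Rightarrow> complex"
  assumes g: "continuous_on UNIV g"
  shows "(oint g has_vector_derivative g x) (at x)"
proof -
  define a where "a = min 0 x - 1"
  define b where "b = max 0 x + 1"
  have integ: "g integrable_on {c..d}" for c d
    by (rule integrable_continuous_real) (rule continuous_on_subset[OF g], simp)
  have a0: "a \<le> 0" by (simp add: a_def)
  have eq: "oint g y = integral {a..y} g - integral {a..0} g" if "y \<in> {a<..<b}" for y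
  proof (cases "0 \<le> y")
    case True
    have "integral {a..0} g + integral {0..y} g = integral {a..y} g"
      using Henstock_Kurzweil_Integration.integral_combine[where f=g and a=a and c=0 and b=y, OF a0 True integ] .
    then show ?thesis using True by (simp add: oint_def algebra_simps)
  next
    case False
    have "integral {a..y} g + integral {y..0} g = integral {a..0} g"
      using Henstock_Kurzweil_Integration.integral_combine[where f=g and a=a and c=y and b=0, OF _ _ integ] that False by simp
    then show ?thesis using False by (simp add: oint_def algebra_simps)
  qed
  have x: "x \<in> {a<..<b}" by (auto simp: a_def b_def)
  have "((\<lambda>u. integral {a..u} g) has_vector_derivative g x) (at x within {a..b})"
    using x by (intro integral_has_vector_derivative continuous_on_subset[OF g]) auto
  then have "((\<lambda>u. integral {a..u} g) has_vector_derivative g x) (at x within {a<..<b})"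
    by (rule has_vector_derivative_within_subset) auto
  then have "((\<lambda>u. integral {a..u} g) has_vector_derivative g x) (at x)"
    using has_vector_derivative_within_open[of x "{a<..<b}" "(\<lambda>u. integral {a..u} g)" "g x"] x by auto
  then have "((\<lambda>u. integral {a..u} g - integral {a..0} g) has_vector_derivative g x) (at x)"
    using has_vector_derivative_diff[OF _ has_vector_derivative_const] by fastforce
  then show ?thesis
    by (rule has_vector_derivative_transform_within_open[OF _ _ x]) (use eq in auto)
qed

lemma oint_0[simp]: "oint g 0 = 0" by (simp add: oint_def)

lemma iint_deriv:
  assumes "\<forall>b\<in>set L. continuous_on UNIV (\<phi> b)"
  shows "continuous_on UNIV (iint \<phi> L) \<and>
         (\<forall>a L'. L = a # L' \<longrightarrow> (\<forall>x. (iint \<phi> L has_vector_derivative \<phi> a x * iint \<phi> L' x) (at x)))"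
  using assms
proof (induction L)
  case Nil
  then show ?case by (simp add: continuous_on_const)
next
  case (Cons a L)
  then have c: "continuous_on UNIV (iint \<phi> L)" by simp
  have ca: "continuous_on UNIV (\<phi> a)" using Cons by simp
  have d: "(iint \<phi> (a#L) has_vector_derivative \<phi> a x * iint \<phi> L x) (at x)" for x
  proof -
    have "iint \<phi> (a#L) = oint (\<lambda>t. \<phi> a t * iint \<phi> L t)" by (simp add: fun_eq_iff)
    moreover have "(oint (\<lambda>t. \<phi> a t * iint \<phi> L t) has_vector_derivative \<phi> a x * iint \<phi> L x) (at x)"
      by (rule oint_deriv) (intro continuous_intros ca c)
    ultimately show ?thesis by simp
  qed
  have "continuous_on UNIV (iint \<phi> (a#L))"
    using d by (intro continuous_on_vector_derivative) (auto intro: has_vector_derivative_at_within)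
  then show ?case using d by (auto simp del: iint.simps)
qed


lemma iint_Cons_0: "iint \<phi> (a # L) 0 = 0" by simp



definition smooth :: "(real \<Rightarrow> complex) \<Rightarrow> bool" where
  "smooth f \<longleftrightarrow> (\<forall>k x. hderiv k f differentiable (at x))"

lemma smooth_coind:
  assumes T: "\<And>f. f \<in> T \<Longrightarrow> (\<forall>x. f differentiable (at x)) \<and> vderiv f \<in> T"
    and f: "f \<in> T"
  shows "smooth f"
proof -
  have "\<forall>f\<in>T. hderiv k f \<in> T" for k
  proof (induction k)
    case 0 then show ?case by simp
  next
    case (Suc k) then show ?case using T by (simp add: hderiv_Suc')
  qed
  then show ?thesis using f T unfolding smooth_def by blast
qed

lemma smooth_diff: "smooth f \<Longrightarrow> f differentiable (at x)"
  unfolding smooth_def using hderiv_0 by metis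

lemma smooth_vderiv: "smooth f \<Longrightarrow> smooth (vderiv f)"
  unfolding smooth_def by (metis hderiv_Suc')

inductive_set cl :: "(real \<Rightarrow> complex) set \<Rightarrow> (real \<Rightarrow> complex) set" for E where
  base: "f \<in> E \<Longrightarrow> f \<in> cl E"
| add: "f \<in> cl E \<Longrightarrow> g \<in> cl E \<Longrightarrow> (\<lambda>x. f x + g x) \<in> cl E"
| mul: "f \<in> cl E \<Longrightarrow> g \<in> cl E \<Longrightarrow> (\<lambda>x. f x * g x) \<in> cl E"

lemma vderiv_add:
  "f differentiable (at x) \<Longrightarrow> g differentiable (at x) \<Longrightarrow>
   vderiv (\<lambda>x. f x + g x) x = vderiv f x + vderiv g x"
  by (intro vderiv_eq has_vector_derivative_add vderiv_works)

lemma vderiv_mul: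
  "f differentiable (at x) \<Longrightarrow> g differentiable (at x) \<Longrightarrow>
   vderiv (\<lambda>x. f x * g x) x = f x * vderiv g x + vderiv f x * g x"
  by (intro vderiv_eq has_vector_derivative_mult vderiv_works)

lemma cl_smooth:
  assumes E: "\<And>e. e \<in> E \<Longrightarrow> (\<forall>x. e differentiable (at x)) \<and> vderiv e \<in> cl E"
    and f: "f \<in> cl E"
  shows "smooth f"
proof (rule smooth_coind[OF _ f])
  fix f assume "f \<in> cl E"
  then show "(\<forall>x. f differentiable (at x)) \<and> vderiv f \<in> cl E"
  proof induction
    case (base f) then show ?case using E by blast
  next
    case (add f g)
    then have "vderiv (\<lambda>x. f x + g x) = (\<lambda>x. vderiv f x + vderiv g x)"
      by (simp add: fun_eq_iff vderiv_add)
    with add show ?case by (auto intro: cl.add)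
  next
    case (mul f g)
    then have "vderiv (\<lambda>x. f x * g x) = (\<lambda>x. f x * vderiv g x + vderiv f x * g x)"
      by (simp add: fun_eq_iff vderiv_mul)
    with mul show ?case by (auto intro!: cl.add cl.mul)
  qed
qed

lemma smooth_E: "smooth f \<Longrightarrow> (\<forall>x. f differentiable (at x)) \<and> vderiv f \<in> cl (Collect smooth)"
  by (auto intro: smooth_diff cl.base smooth_vderiv)

lemma smooth_add: "smooth f \<Longrightarrow> smooth g \<Longrightarrow> smooth (\<lambda>x. f x + g x)"
  by (rule cl_smooth[of "Collect smooth"]) (auto intro: smooth_diff cl.base smooth_vderiv cl.add)

lemma smooth_mul: "smooth f \<Longrightarrow> smooth g \<Longrightarrow> smooth (\<lambda>x. f x * g x)"
  by (rule cl_smooth[of "Collect smooth"]) (auto intro: smooth_diff cl.base smooth_vderiv cl.mul)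

lemma smooth_const: "smooth (\<lambda>x. c)"
proof (rule smooth_coind[of "range (\<lambda>c. \<lambda>x. c)"])
  fix f assume "f \<in> range (\<lambda>c. \<lambda>x::real. c::complex)"
  then obtain d where "f = (\<lambda>x. d)" by auto
  moreover have "vderiv (\<lambda>x::real. d) = (\<lambda>x. 0::complex)" by (simp add: fun_eq_iff vderiv_def)
  ultimately show "(\<forall>x. f differentiable (at x)) \<and> vderiv f \<in> range (\<lambda>c. \<lambda>x::real. c::complex)"
    by auto
qed auto

lemma smooth_sum: "finite S \<Longrightarrow> (\<And>i. i \<in> S \<Longrightarrow> smooth (f i)) \<Longrightarrow> smooth (\<lambda>x. \<Sum>i\<in>S. f i x)"
  by (induction S rule: finite_induct) (auto intro: smooth_add smooth_const)

lemma smooth_prod: "finite S \<Longrightarrow> (\<And>i. i \<in> S \<Longrightarrow> smooth (f i)) \<Longrightarrow> smooth (\<lambda>x. \<Prod>i\<in>S. f i x)"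
  by (induction S rule: finite_induct) (auto intro: smooth_mul smooth_const)

lemma smooth_sum_list: "(\<And>y. y \<in> set ys \<Longrightarrow> smooth (f y)) \<Longrightarrow> smooth (\<lambda>x. \<Sum>y\<leftarrow>ys. f y x)"
  by (induction ys) (auto intro: smooth_add smooth_const)

lemma smooth_eta: "smooth f \<Longrightarrow> smooth (\<lambda>x. f x)" by simp

lemma smooth_inverse:
  assumes h: "smooth h" and nz: "\<And>x. h x \<noteq> 0"
  shows "smooth (\<lambda>x. inverse (h x))"
proof (rule cl_smooth[of "Collect smooth \<union> {\<lambda>x. inverse (h x)}"])
  let ?E = "Collect smooth \<union> {\<lambda>x. inverse (h x)}"
  fix e assume "e \<in> ?E"
  then consider "smooth e" | "e = (\<lambda>x. inverse (h x))" by auto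
  then show "(\<forall>x. e differentiable (at x)) \<and> vderiv e \<in> cl ?E"
  proof cases
    case 1 then show ?thesis using smooth_E[OF 1] by (auto intro: smooth_diff cl.base smooth_vderiv)
  next
    case 2
    have d: "(e has_vector_derivative (vderiv h x * - (inverse (h x) ^ 2))) (at x)" for x
    proof -
      have "((inverse \<circ> h) has_vector_derivative (vderiv h x * - (inverse (h x) ^ Suc (Suc 0)))) (at x within UNIV)"
        by (intro field_vector_diff_chain_within vderiv_works smooth_diff h DERIV_inverse nz)
      then show ?thesis using 2 by (simp add: o_def power2_eq_square)
    qed
    then have "vderiv e = (\<lambda>x. (- 1) * (vderiv h x * (inverse (h x) * inverse (h x))))"
      by (auto simp: fun_eq_iff vderiv_eq power2_eq_square)
    moreover have "(\<lambda>x. (- 1) * (vderiv h x * (inverse (h x) * inverse (h x)))) \<in> cl ?E"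
      by (intro cl.mul cl.base) (auto simp: 2 smooth_const smooth_vderiv h)
    ultimately show ?thesis using d by (auto intro: differentiableI_vector)
  qed
qed (rule cl.base, simp)



lemma sqrt_root_diff:
  fixes P f0 :: "real \<Rightarrow> complex"
  assumes P: "smooth P" and nz: "\<And>x. P x \<noteq> 0"
    and cf: "continuous_on UNIV f0" and sq: "\<And>x. f0 x ^ 2 * P x = 1"
  shows "f0 differentiable (at x)"
proof -
  define c where "c = f0 x"
  have c0: "c \<noteq> 0" using sq[of x] by (auto simp: c_def)
  define q where "q = (\<lambda>y. P x * inverse (P y))"
  define R where "R = (\<lambda>y. c * csqrt (q y))"
  have qx: "q x = 1" using nz[of x] by (simp add: q_def)
  have qd: "q differentiable (at x)"
    unfolding q_def by (intro smooth_diff smooth_mul smooth_const smooth_inverse P nz)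
  have "(csqrt \<circ> q) differentiable (at x)"
    by (rule differentiable_chain_at[OF qd]) (auto simp: qx intro!: field_differentiable_imp_differentiable field_differentiable_at_csqrt)
  then obtain D0 where "((csqrt \<circ> q) has_vector_derivative D0) (at x)" using vector_derivative_works by blast
  then have "(R has_vector_derivative c * D0) (at x)"
    unfolding R_def using has_vector_derivative_mult_right[of "csqrt \<circ> q" D0 "at x" c] by (simp add: o_def)
  then have Rd: "R differentiable (at x)" by (rule differentiableI_vector)
  have Rx: "R x = c" by (simp add: R_def qx)
  have Rsq: "R y ^ 2 = f0 y ^ 2" for y
  proof -
    have "R y ^ 2 = c^2 * (P x * inverse (P y))" by (simp add: R_def q_def power_mult_distrib)
    also have "\<dots> = inverse (P y)" using sq[of x] nz[of x] by (simp add: c_def field_simps)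
    also have "\<dots> = f0 y ^ 2" using sq[of y] nz[of y] by (simp add: field_simps)
    finally show ?thesis .
  qed
  have "continuous (at x) f0" using cf by (simp add: continuous_on_eq_continuous_at)
  moreover have "continuous (at x) R" using Rd by (rule differentiable_imp_continuous_within)
  ultimately have "\<forall>\<^sub>F y in at x. dist (f0 y) c < norm c" "\<forall>\<^sub>F y in at x. dist (R y) c < norm c"
    using c0 Rx by (auto simp: continuous_at c_def intro!: tendstoD)
  then have "\<forall>\<^sub>F y in at x. dist (f0 y) c < norm c \<and> dist (R y) c < norm c"
    by (rule eventually_conj)
  then obtain d where d: "d > 0" and dd: "\<And>y. y \<noteq> x \<Longrightarrow> dist y x < d \<Longrightarrow> dist (f0 y) c < norm c \<and> dist (R y) c < norm c"
    by (auto simp: eventually_at)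
  have eq: "f0 y = R y" if "y \<in> ball x d" for y
  proof (cases "y = x")
    case True then show ?thesis using Rx by (simp add: c_def)
  next
    case False
    with that dd have h: "dist (f0 y) c < norm c" "dist (R y) c < norm c" by (auto simp: dist_commute)
    have "f0 y = R y \<or> f0 y = - R y" using Rsq[of y] by (metis power2_eq_iff)
    moreover have "f0 y \<noteq> - R y"
    proof
      assume "f0 y = - R y"
      then have "norm (R y + c) < norm c" "norm (R y - c) < norm c" using h
        by (auto simp: dist_norm norm_minus_commute add.commute)
      moreover have "norm (2 * c) \<le> norm (R y + c) + norm (R y - c)"
        using norm_triangle_ineq4[of "R y + c" "R y - c"] by simp
      ultimately show False by (simp add: norm_mult)
    qed
    ultimately show ?thesis by blast
  qed
  obtain D where "(R has_vector_derivative D) (at x)" using Rd vector_derivative_works by blast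
  then have "(f0 has_vector_derivative D) (at x)"
    by (rule has_vector_derivative_transform_within_open[of _ _ _ "ball x d"]) (use d eq in auto)
  then show ?thesis by (rule differentiableI_vector)
qed

lemma sqrt_root_smooth:
  fixes P f0 :: "real \<Rightarrow> complex"
  assumes P: "smooth P" and nz: "\<And>x. P x \<noteq> 0"
    and cf: "continuous_on UNIV f0" and sq: "\<And>x. f0 x ^ 2 * P x = 1"
  shows "smooth f0"
proof -
  have fd: "f0 differentiable (at x)" for x by (rule sqrt_root_diff[OF P nz cf sq])
  define r where "r = (\<lambda>x. (- 1 / 2) * (vderiv P x * inverse (P x)))"
  have rs: "smooth r" unfolding r_def
    by (intro smooth_mul smooth_const smooth_vderiv smooth_inverse P nz)
  have vd: "vderiv f0 x = f0 x * r x" for x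
  proof -
    have D1: "((\<lambda>y. f0 y * f0 y * P y) has_vector_derivative
             (f0 x * f0 x * vderiv P x + (f0 x * vderiv f0 x + vderiv f0 x * f0 x) * P x)) (at x)"
      by (intro has_vector_derivative_mult vderiv_works fd smooth_diff P)
    have "(\<lambda>y. f0 y * f0 y * P y) = (\<lambda>y. 1)" using sq by (simp add: fun_eq_iff power2_eq_square)
    then have D2: "((\<lambda>y. f0 y * f0 y * P y) has_vector_derivative 0) (at x)" by simp
    have e: "f0 x * f0 x * vderiv P x + 2 * f0 x * vderiv f0 x * P x = 0"
      using vector_derivative_unique_at[OF D1 D2] by (simp add: algebra_simps)
    have f0x: "f0 x \<noteq> 0" "P x \<noteq> 0" using sq[of x] nz[of x] by auto
    have "f0 x * (f0 x * vderiv P x + 2 * P x * vderiv f0 x) = 0" using e by (simp add: algebra_simps)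
    then have "f0 x * vderiv P x + 2 * P x * vderiv f0 x = 0" using f0x by simp
    then have "P x * (vderiv f0 x * 2) = - (f0 x * vderiv P x)" by (simp add: algebra_simps add_eq_0_iff)
    then show ?thesis using f0x unfolding r_def by (simp add: field_simps)
  qed
  show ?thesis
  proof (rule cl_smooth[of "Collect smooth \<union> {f0}"])
    fix e assume "e \<in> Collect smooth \<union> {f0}"
    then consider "smooth e" | "e = f0" by auto
    then show "(\<forall>x. e differentiable (at x)) \<and> vderiv e \<in> cl (Collect smooth \<union> {f0})"
    proof cases
      case 1 then show ?thesis by (auto intro: smooth_diff cl.base smooth_vderiv)
    next
      case 2
      have "vderiv f0 = (\<lambda>x. f0 x * r x)" by (simp add: fun_eq_iff vd)
      moreover have "(\<lambda>x. f0 x * r x) \<in> cl (Collect smooth \<union> {f0})"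
        by (intro cl.mul cl.base) (auto simp: rs)
      ultimately show ?thesis using 2 fd by auto
    qed
  qed (rule cl.base, simp)
qed



definition succs :: "nat \<Rightarrow> nat \<Rightarrow> (nat \<times> nat) list" where
  "succs n p = (if p + 3 \<le> n then [(p+1,p+1)]
     else if p + 2 = n then [(n-1,n-1),(n,n)]
     else if p + 1 = n then [(n+1,n)]
     else if p = n then [(n+1,n-1)]
     else if p + 2 \<le> 2*n then [(p+1,p)] else [])"

lemma succs_prop:
  assumes "n \<ge> 3" "(q,a) \<in> set (succs n p)"
  shows "p < q \<and> q < 2*n \<and> 1 \<le> a \<and> a \<le> 2*n-2"
  using assms by (auto simp: succs_def split: if_splits)

function paths :: "nat \<Rightarrow> nat \<Rightarrow> nat \<Rightarrow> nat list list" where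
  "paths n p k = (if p = k then [[]] else if p < k then
      concat (map (\<lambda>(q,a). map (Cons a) (paths n q k)) (succs n p)) else [])"
  by pat_completeness auto
termination
  by (relation "Wellfounded.measure (\<lambda>(n,p,k). k - p)") (auto simp: succs_def split: if_splits)

declare paths.simps[simp del]

lemma paths_eq[simp]: "paths n p p = [[]]" by (simp add: paths.simps)
lemma paths_gt: "k < p \<Longrightarrow> paths n p k = []" by (simp add: paths.simps)
lemma paths_lt: "p < k \<Longrightarrow> paths n p k = concat (map (\<lambda>(q,a). map (Cons a) (paths n q k)) (succs n p))"
  by (subst paths.simps) simp

lemma paths_labels:
  shows "n \<ge> 3 \<Longrightarrow> L \<in> set (paths n p k) \<Longrightarrow> a \<in> set L \<Longrightarrow> 1 \<le> a \<and> a \<le> 2*n-2"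
proof (induction n p k arbitrary: L rule: paths.induct)
  case (1 n p k)
  show ?case
  proof (cases "p < k")
    case True
    with "1.prems"(2) obtain q b L' where qb: "(q,b) \<in> set (succs n p)" "L = b # L'" "L' \<in> set (paths n q k)"
      by (auto simp: paths_lt)
    have pk: "p \<noteq> k" using True by simp
    show ?thesis using "1.prems"(2) "1.prems"(3) "1.IH"[OF pk True qb(1) refl "1.prems"(1) qb(3)] succs_prop[OF "1.prems"(1) qb(1)] qb by auto
  next
    case False
    then show ?thesis using "1.prems"(2,3) by (cases "p = k") (auto simp: paths_gt)
  qed
qed

lemma paths_nonempty: "p \<noteq> k \<Longrightarrow> L \<in> set (paths n p k) \<Longrightarrow> L \<noteq> []"
  by (cases "p < k") (auto simp: paths_lt paths_gt)

definition Ym :: "(nat \<Rightarrow> real \<Rightarrow> complex) \<Rightarrow> nat \<Rightarrow> nat \<Rightarrow> nat \<Rightarrow> real \<Rightarrow> complex" where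
  "Ym \<phi> n p k x = (\<Sum>L\<leftarrow>paths n p k. iint \<phi> L x)"

lemma Ym_gt: "k < p \<Longrightarrow> Ym \<phi> n p k x = 0" by (simp add: Ym_def paths_gt)

lemma Ym_0: "Ym \<phi> n p k 0 = (if p = k then 1 else 0)"
proof (cases "p = k")
  case False
  have "(\<Sum>L\<leftarrow>paths n p k. iint \<phi> L 0) = (\<Sum>L\<leftarrow>paths n p k. 0)"
    by (rule arg_cong[where f=sum_list], rule map_cong) (auto dest!: paths_nonempty[OF False] simp: neq_Nil_conv)
  then show ?thesis using False by (simp add: Ym_def)
qed (simp add: Ym_def)

lemma sum_list_concat_map: "(\<Sum>y\<leftarrow>concat xss. f y) = (\<Sum>xs\<leftarrow>xss. \<Sum>y\<leftarrow>xs. f y)"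
  by (induction xss) auto

lemma hvd_sum_list:
  "(\<And>y. y \<in> set ys \<Longrightarrow> ((\<lambda>x. f y x) has_vector_derivative f' y) (at x)) \<Longrightarrow>
   ((\<lambda>x. \<Sum>y\<leftarrow>ys. f y x) has_vector_derivative (\<Sum>y\<leftarrow>ys. f' y)) (at x)"
  by (induction ys) (auto intro!: has_vector_derivative_add)

lemma sum_list_zero': "(\<And>y. y \<in> set ys \<Longrightarrow> f y = 0) \<Longrightarrow> (\<Sum>y\<leftarrow>ys. f y) = (0::'a::comm_monoid_add)"
  by (induction ys) auto

lemma Ym_deriv:
  assumes n: "n \<ge> 3" and cont: "\<And>a. 1 \<le> a \<Longrightarrow> a \<le> 2*n-2 \<Longrightarrow> continuous_on UNIV (\<phi> a)"
  shows "(Ym \<phi> n p k has_vector_derivative (\<Sum>(q,a)\<leftarrow>succs n p. \<phi> a x * Ym \<phi> n q k x)) (at x)"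
proof (cases "p < k")
  case False
  have z: "(\<Sum>(q,a)\<leftarrow>succs n p. \<phi> a x * Ym \<phi> n q k x) = 0"
    using False by (intro sum_list_zero') (auto simp: Ym_gt dest!: succs_prop[OF n])
  have "Ym \<phi> n p k = (\<lambda>x. if p = k then 1 else 0)"
    using False by (auto simp: fun_eq_iff Ym_def paths_gt)
  then show ?thesis using z by simp
next
  case True
  have e: "Ym \<phi> n p k = (\<lambda>x. \<Sum>(q,a)\<leftarrow>succs n p. \<Sum>L\<leftarrow>paths n q k. iint \<phi> (a#L) x)"
    using True by (simp add: fun_eq_iff Ym_def paths_lt sum_list_concat_map o_def case_prod_unfold)
  have "((\<lambda>x. \<Sum>(q,a)\<leftarrow>succs n p. \<Sum>L\<leftarrow>paths n q k. iint \<phi> (a#L) x) has_vector_derivative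
        (\<Sum>(q,a)\<leftarrow>succs n p. \<Sum>L\<leftarrow>paths n q k. \<phi> a x * iint \<phi> L x)) (at x)"
    unfolding case_prod_unfold
  proof (intro hvd_sum_list)
    fix qa L assume qa: "qa \<in> set (succs n p)" and L: "L \<in> set (paths n (fst qa) k)"
    have "\<forall>b\<in>set (snd qa # L). continuous_on UNIV (\<phi> b)"
      using succs_prop[OF n, of "fst qa" "snd qa" p] qa paths_labels[OF n L] cont by auto
    from iint_deriv[OF this] show "((\<lambda>x. iint \<phi> (snd qa # L) x) has_vector_derivative \<phi> (snd qa) x * iint \<phi> L x) (at x)"
      by (auto simp del: iint.simps)
  qed
  moreover have "(\<Sum>(q,a)\<leftarrow>succs n p. \<Sum>L\<leftarrow>paths n q k. \<phi> a x * iint \<phi> L x) = (\<Sum>(q,a)\<leftarrow>succs n p. \<phi> a x * Ym \<phi> n q k x)"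
    by (simp add: Ym_def sum_list_const_mult case_prod_unfold)
  ultimately show ?thesis using e by simp
qed

definition Am :: "(nat \<Rightarrow> real \<Rightarrow> complex) \<Rightarrow> nat \<Rightarrow> nat \<Rightarrow> nat \<Rightarrow> real \<Rightarrow> complex" where
  "Am \<phi> n r p x = (\<Sum>(q,a)\<leftarrow>succs n r. if q = p then \<phi> a x else 0)"

lemma sum_list_to_sum:
  fixes g :: "nat \<Rightarrow> complex" and N :: nat
  assumes "\<forall>(r,a)\<in>set xs. r < N"
  shows "(\<Sum>q<N. (\<Sum>(r,a)\<leftarrow>xs. if r = q then g a else 0) * h q) = (\<Sum>(r,a)\<leftarrow>xs. g a * h r)"
  using assms
proof (induction xs)
  case Nil then show ?case by simp
next
  case (Cons ra xs)
  obtain r a where ra: "ra = (r,a)" by force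
  have "(\<Sum>q<N. (\<Sum>(r,a)\<leftarrow>ra#xs. if r = q then g a else 0) * h q)
      = (\<Sum>q<N. (if r = q then g a * h q else 0)) + (\<Sum>q<N. (\<Sum>(r,a)\<leftarrow>xs. if r = q then g a else 0) * h q)"
  proof -
    have "(\<Sum>(r,a)\<leftarrow>ra#xs. if r = q then g a else 0) * h q
         = (if r = q then g a * h q else 0) + (\<Sum>(r,a)\<leftarrow>xs. if r = q then g a else 0) * h q" for q
      by (simp add: ra distrib_right)
    then show ?thesis by (simp add: sum.distrib)
  qed
  also have "\<dots> = g a * h r + (\<Sum>(r,a)\<leftarrow>xs. g a * h r)"
  proof -
    have "(\<Sum>q<N. if r = q then g a * h q else 0) = (if r \<in> {..<N} then g a * h r else 0)"
      by (rule sum.delta') simp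
    then show ?thesis using Cons ra by simp
  qed
  finally show ?case by (simp add: ra)
qed

lemma Ym_deriv_Am:
  assumes n: "n \<ge> 3" and cont: "\<And>a. 1 \<le> a \<Longrightarrow> a \<le> 2*n-2 \<Longrightarrow> continuous_on UNIV (\<phi> a)"
  shows "(Ym \<phi> n p k has_vector_derivative (\<Sum>q<2*n. Am \<phi> n p q x * Ym \<phi> n q k x)) (at x)"
proof -
  have "(\<Sum>q<2*n. Am \<phi> n p q x * Ym \<phi> n q k x) = (\<Sum>(q,a)\<leftarrow>succs n p. \<phi> a x * Ym \<phi> n q k x)"
    unfolding Am_def by (rule sum_list_to_sum) (auto dest: succs_prop[OF n])
  then show ?thesis using Ym_deriv[OF n cont] by simp
qed



lemma paths_hi:
  assumes n: "n \<ge> 3"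
  shows "n+1 \<le> p \<Longrightarrow> p \<le> k \<Longrightarrow> k \<le> 2*n-1 \<Longrightarrow> paths n p k = [[p..<k]]"
proof (induction "k - p" arbitrary: p)
  case 0 then show ?case by simp
next
  case (Suc d)
  have s: "succs n p = [(p+1,p)]" using Suc.prems Suc.hyps by (auto simp: succs_def)
  have "paths n (p+1) k = [[p+1..<k]]" using Suc by auto
  then show ?case using Suc.hyps s by (simp add: paths_lt upt_conv_Cons)
qed

lemma paths_mid1:
  assumes n: "n \<ge> 3" and m: "m \<le> n - 2"
  shows "paths n (n-1) (n+1+m) = [n # [n+1..<n+m+1]]"
proof -
  have s: "succs n (n-1) = [(n+1,n)]" using n by (auto simp: succs_def)
  have "paths n (n+1) (n+1+m) = [[n+1..<n+m+1]]" using n m by (subst paths_hi) auto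
  then show ?thesis using s n by (simp add: paths_lt)
qed

lemma paths_mid2:
  assumes n: "n \<ge> 3" and m: "m \<le> n - 2"
  shows "paths n n (n+1+m) = [(n-1) # [n+1..<n+m+1]]"
proof -
  have s: "succs n n = [(n+1,n-1)]" using n by (auto simp: succs_def)
  have "paths n (n+1) (n+1+m) = [[n+1..<n+m+1]]" using n m by (subst paths_hi) auto
  then show ?thesis using s n by (simp add: paths_lt)
qed

lemma paths_lo:
  assumes n: "n \<ge> 3"
  shows "p \<le> k \<Longrightarrow> k \<le> n-2 \<Longrightarrow> paths n p k = [[p+1..<k+1]]"
proof (induction "k - p" arbitrary: p)
  case 0 then show ?case by simp
next
  case (Suc d)
  have s: "succs n p = [(p+1,p+1)]" using Suc.prems Suc.hyps by (auto simp: succs_def)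
  have pk: "p < k" using Suc.hyps by arith
  have u: "[p+1..<k+1] = (p+1) # [p+2..<k+1]" using pk by (simp add: upt_conv_Cons del: upt_Suc)
  have "paths n (p+1) k = [[p+2..<k+1]]" using Suc by auto
  then show ?case using pk s by (simp add: paths_lt del: upt_Suc) (rule upt_conv_Cons[symmetric], simp)
qed

lemma succs_low: "p + 3 \<le> n \<Longrightarrow> succs n p = [(p+1,p+1)]" by (simp add: succs_def)
lemma succs_nm2: "n \<ge> 3 \<Longrightarrow> succs n (n-2) = [(n-1,n-1),(n,n)]" by (simp add: succs_def)

lemma paths_b1:
  assumes n: "n \<ge> 3"
  shows "p \<le> n-2 \<Longrightarrow> paths n p (n-1) = [[p+1..<n-1] @ [n-1]]"
proof (induction "n - 2 - p" arbitrary: p)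
  case 0
  then have p: "p = n - 2" by simp
  have "paths n (n-2) (n-1) = [[n-1]]"
    using n by (simp add: paths_lt succs_nm2 paths_gt)
  then show ?case using p by simp
next
  case (Suc d)
  have s: "succs n p = [(p+1,p+1)]" using Suc.prems Suc.hyps by (intro succs_low) simp
  have "paths n (p+1) (n-1) = [[p+2..<n-1] @ [n-1]]" using Suc by auto
  then show ?case using Suc.hyps n s by (simp add: paths_lt upt_conv_Cons)
qed

lemma paths_b2:
  assumes n: "n \<ge> 3"
  shows "p \<le> n-2 \<Longrightarrow> paths n p n = [[p+1..<n-1] @ [n]]"
proof (induction "n - 2 - p" arbitrary: p)
  case 0
  then have p: "p = n - 2" by simp
  have e: "paths n (n-1) n = []"
  proof -
    have "succs n (n-1) = [(n+1,n)]" using n by (auto simp: succs_def)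
    then show ?thesis using n by (simp add: paths_lt paths_gt)
  qed
  have "paths n (n-2) n = [[n]]"
    using n e by (simp add: paths_lt succs_nm2)
  then show ?case using p by simp
next
  case (Suc d)
  have s: "succs n p = [(p+1,p+1)]" using Suc.prems Suc.hyps by (intro succs_low) simp
  have "paths n (p+1) n = [[p+2..<n-1] @ [n]]" using Suc by auto
  then show ?case using Suc.hyps n s by (simp add: paths_lt upt_conv_Cons)
qed

lemma paths_c:
  assumes n: "n \<ge> 3" and m: "m \<le> n - 2"
  shows "p \<le> n-2 \<Longrightarrow> paths n p (n+1+m) =
     [[p+1..<n-1] @ [n-1, n] @ [n+1..<n+m+1], [p+1..<n-1] @ [n, n-1] @ [n+1..<n+m+1]]"
proof (induction "n - 2 - p" arbitrary: p)
  case 0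
  then have p: "p = n - 2" by simp
  have e1: "paths n (n-2) (n+1+m) = map (Cons (n-1)) (paths n (n-1) (n+1+m)) @ map (Cons n) (paths n n (n+1+m))"
    by (subst paths_lt) (use n in \<open>simp_all add: succs_nm2\<close>)
  have "paths n (n-2) (n+1+m) = [[n-1, n] @ [n+1..<n+m+1], [n, n-1] @ [n+1..<n+m+1]]"
    unfolding e1 paths_mid1[OF n m] paths_mid2[OF n m] by simp
  then show ?case using p by simp
next
  case (Suc d)
  have s: "succs n p = [(p+1,p+1)]" using Suc.prems Suc.hyps by (intro succs_low) simp
  have "paths n (p+1) (n+1+m) = [[p+2..<n-1] @ [n-1, n] @ [n+1..<n+m+1], [p+2..<n-1] @ [n, n-1] @ [n+1..<n+m+1]]"
    using Suc by auto
  then show ?case using Suc.hyps n s by (simp add: paths_lt upt_conv_Cons)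
qed

lemma Ftil_Ym:
  assumes n: "n \<ge> 3" and k: "k < 2*n"
  shows "Ftil n \<phi> k = Ym \<phi> n 0 k"
proof -
  have "k \<le> n-2 \<or> k = n-1 \<or> k = n \<or> (k = n+1+(k-(n+1)) \<and> k-(n+1) \<le> n-2)" using n k by arith
  moreover
  { assume "k \<le> n-2" then have ?thesis using n by (simp add: Ftil_def Ym_def fun_eq_iff paths_lo) }
  moreover
  { assume "k = n-1" then have ?thesis using n paths_b1[OF n, of 0] by (simp add: Ftil_def Ym_def fun_eq_iff) }
  moreover
  { assume "k = n" then have ?thesis using n by (simp add: Ftil_def Ym_def fun_eq_iff paths_b2) }
  moreover
  { assume a: "k = n+1+(k-(n+1))" "k-(n+1) \<le> n-2"
    define m where "m = k - (n+1)"
    have km: "k = n + 1 + m" "m \<le> n - 2" using a by (auto simp: m_def)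
    have P: "paths n 0 k = [[1..<n-1] @ [n-1, n] @ [n+1..<n+m+1], [1..<n-1] @ [n, n-1] @ [n+1..<n+m+1]]"
      unfolding km(1) using paths_c[OF n km(2), of 0] by simp
    have F: "Ftil n \<phi> k = (\<lambda>x. iint \<phi> ([1..<n-1] @ [n-1, n] @ [n+1..<n+m+1]) x + iint \<phi> ([1..<n-1] @ [n, n-1] @ [n+1..<n+m+1]) x)"
    proof -
      have "\<not> k \<le> n-2" "k \<noteq> n-1" "k \<noteq> n" "k - (n+1) = m" using n km by auto
      then show ?thesis unfolding Ftil_def Let_def by (simp only: if_False)
    qed
    have ?thesis unfolding F by (simp add: Ym_def P fun_eq_iff del: iint.simps upt_Suc) }
  ultimately show ?thesis by blast
qed



lemma K_Suc:
  assumes "r \<noteq> n - 1" "Suc r < 2*n"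
  shows "Kentry n (Suc r) = - Kentry n r"
proof (cases "r < n - 1")
  case True
  then have "min (Suc r) (2*n - 1 - Suc r) = Suc r" "min r (2*n-1-r) = r" by auto
  then show ?thesis by (simp add: Kentry_def)
next
  case False
  then have "r \<ge> n" using assms by auto
  then have "min (Suc r) (2*n - 1 - Suc r) = 2*n-2-r" "min r (2*n-1-r) = Suc (2*n-2-r)" using assms by auto
  then show ?thesis by (simp add: Kentry_def)
qed

lemma K_n: "n \<ge> 1 \<Longrightarrow> Kentry n n = Kentry n (n-1)"
proof -
  assume "n \<ge> 1"
  then have "min n (2*n-1-n) = n - 1" "min (n-1) (2*n-1-(n-1)) = n-1" by auto
  then show ?thesis by (simp add: Kentry_def)
qed

lemma sym_K:
  assumes n: "n \<ge> 3" and e: "(r,a) \<in> set (succs n p)"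
  shows "Kentry n r = - Kentry n p"
proof -
  have "p + 3 \<le> n \<and> r = p+1 \<or> p + 2 = n \<and> r = n-1 \<or> p + 2 = n \<and> r = n \<or> p + 1 = n \<and> r = n+1
        \<or> p = n \<and> r = n+1 \<or> (n < p \<and> p + 2 \<le> 2*n \<and> r = p+1)"
    using e by (auto simp: succs_def split: if_splits)
  moreover
  { assume a: "p + 3 \<le> n \<and> r = p+1"
    then have "p \<noteq> n - 1" "Suc p < 2*n" by arith+
    then have ?thesis using K_Suc[of p n] a by simp }
  moreover
  { assume a: "p + 2 = n \<and> r = n-1"
    then have "p \<noteq> n - 1" "Suc p < 2*n" "r = Suc p" by arith+
    then have ?thesis using K_Suc[of p n] by simp }
  moreover
  { assume a: "p + 2 = n \<and> r = n"
    then have "p \<noteq> n - 1" "Suc p < 2*n" "n - 1 = Suc p" "n \<ge> 1" by arith+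
    then have ?thesis using K_Suc[of p n] K_n[of n] a by simp }
  moreover
  { assume a: "p + 1 = n \<and> r = n+1"
    then have "p = n - 1" "r = Suc n" "n \<noteq> n - 1" by arith+
    then have ?thesis using K_Suc[of n n] n K_n[of n] by simp }
  moreover
  { assume a: "p = n \<and> r = n+1"
    then have ?thesis using K_Suc[of n n] n by simp }
  moreover
  { assume a: "n < p \<and> p + 2 \<le> 2*n \<and> r = p+1"
    then have "p \<noteq> n - 1" by arith
    then have ?thesis using K_Suc[of p n] n a by simp }
  ultimately show ?thesis by blast
qed

lemma sperm_inv: "1 \<le> a \<Longrightarrow> a \<le> 2*n-2 \<Longrightarrow> sperm n (sperm n a) = a"
  by (auto simp: sperm_def)

lemma sperm_range: "1 \<le> a \<Longrightarrow> a \<le> 2*n-2 \<Longrightarrow> n \<ge> 3 \<Longrightarrow> 1 \<le> sperm n a \<and> sperm n a \<le> 2*n-2"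
  by (auto simp: sperm_def)

lemma sym_edge:
  assumes n: "n \<ge> 3" and e: "(r,a) \<in> set (succs n p)"
  shows "(2*n-1-p, sperm n a) \<in> set (succs n (2*n-1-r))"
proof -
  have "p + 3 \<le> n \<and> r = p+1 \<and> a = p+1 \<or> p + 2 = n \<and> r = n-1 \<and> a = n-1 \<or> p + 2 = n \<and> r = n \<and> a = n
        \<or> p + 1 = n \<and> r = n+1 \<and> a = n
        \<or> p = n \<and> r = n+1 \<and> a = n-1 \<or> (n < p \<and> p + 2 \<le> 2*n \<and> r = p+1 \<and> a = p)"
    using e by (auto simp: succs_def split: if_splits)
  moreover
  { assume a: "p + 3 \<le> n \<and> r = p+1 \<and> a = p+1"
    define m where "m = 2*n-2-p"
    have "2*n-1-r = m" "\<not> (m + 3 \<le> n)" "m + 2 \<noteq> n" "m + 1 \<noteq> n" "m \<noteq> n"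
      "m + 2 \<le> 2*n" "sperm n a = m" "m+1 = 2*n-1-p" using a by (auto simp: sperm_def m_def)
    then have ?thesis unfolding succs_def by simp }
  moreover
  { assume a: "p + 2 = n \<and> r = n-1 \<and> a = n-1"
    then have "2*n-1-r = n" "2*n-1-p = n+1" "sperm n a = n-1" using n by (auto simp: sperm_def)
    then have ?thesis unfolding succs_def by simp }
  moreover
  { assume a: "p + 2 = n \<and> r = n \<and> a = n"
    then have "2*n-1-r = n-1" "2*n-1-p = n+1" "sperm n a = n" "\<not> (n - 1 + 3 \<le> n)" "n - 1 + 2 \<noteq> n" "n-1+1 = n" using n by (auto simp: sperm_def)
    then have ?thesis unfolding succs_def by simp }
  moreover
  { assume a: "p + 1 = n \<and> r = n+1 \<and> a = n"
    then have "2*n-1-r = n-2" "2*n-1-p = n" "sperm n a = n" "\<not> (n - 2 + 3 \<le> n)" "n - 2 + 2 = n" using n by (auto simp: sperm_def)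
    then have ?thesis unfolding succs_def by simp }
  moreover
  { assume a: "p = n \<and> r = n+1 \<and> a = n-1"
    then have "2*n-1-r = n-2" "2*n-1-p = n-1" "sperm n a = n-1" "\<not> (n - 2 + 3 \<le> n)" "n - 2 + 2 = n" using n by (auto simp: sperm_def)
    then have ?thesis unfolding succs_def by simp }
  moreover
  { assume a: "n < p \<and> p + 2 \<le> 2*n \<and> r = p+1 \<and> a = p"
    define m where "m = 2*n-2-p"
    have "2*n-1-r = m" "m + 3 \<le> n" "sperm n a = m + 1" "m+1 = 2*n-1-p" using a n by (auto simp: sperm_def m_def)
    then have ?thesis unfolding succs_def by simp }
  ultimately show ?thesis by blast
qed

lemma succs_distinct: "n \<ge> 3 \<Longrightarrow> distinct (map fst (succs n p))"
  by (auto simp: succs_def)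

lemma sum_list_single:
  fixes g :: "nat \<Rightarrow> complex"
  assumes "(t,a) \<in> set xs" "distinct (map fst xs)" "\<And>r b. (r,b) \<in> set xs \<Longrightarrow> P r \<longleftrightarrow> r = t"
  shows "(\<Sum>(r,b)\<leftarrow>xs. if P r then g b else 0) = g a"
  using assms
proof (induction xs)
  case Nil then show ?case by simp
next
  case (Cons rb xs)
  obtain r b where rb: "rb = (r,b)" by force
  show ?case
  proof (cases "r = t")
    case True
    then have "a = b" using Cons.prems rb by (auto simp: image_iff)
    moreover have "(\<Sum>(r,b)\<leftarrow>xs. if P r then g b else 0) = 0"
    proof (intro sum_list_zero')
      fix y assume y: "y \<in> set xs"
      obtain r' b' where y': "y = (r',b')" by force
      have "r' \<noteq> t" using Cons.prems(2) rb True y y' by (auto simp: image_iff)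
      then have "\<not> P r'" using Cons.prems(3)[of r' b'] y y' by auto
      then show "(case y of (r, b) \<Rightarrow> if P r then g b else 0) = 0" using y' by simp
    qed
    ultimately show ?thesis using rb True Cons.prems by auto
  next
    case False
    then have "\<not> P r" using Cons.prems rb by auto
    moreover have "(\<Sum>(r,b)\<leftarrow>xs. if P r then g b else 0) = g a"
      using Cons False rb by auto
    ultimately show ?thesis using rb by simp
  qed
qed

lemma sum_list_none:
  fixes g :: "nat \<Rightarrow> complex"
  assumes "\<And>r b. (r,b) \<in> set xs \<Longrightarrow> \<not> P r"
  shows "(\<Sum>(r,b)\<leftarrow>xs. if P r then g b else 0) = 0"
  using assms by (intro sum_list_zero') auto

lemma so_cond:
  assumes n: "n \<ge> 3" and p: "p < 2*n" and q: "q < 2*n"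
  shows "(\<Sum>(r,a)\<leftarrow>succs n p. if r + q = 2*n-1 then \<phi> a x * Kentry n r else 0)
       + (\<Sum>(r,b)\<leftarrow>succs n q. if p + r = 2*n-1 then \<phi> (sperm n b) x * Kentry n p else 0) = 0"
proof (cases "\<exists>a. (2*n-1-q, a) \<in> set (succs n p)")
  case True
  then obtain a where a: "(2*n-1-q, a) \<in> set (succs n p)" by blast
  have a2: "(2*n-1-p, sperm n a) \<in> set (succs n q)"
    using sym_edge[OF n a] q by simp
  have s1: "(\<Sum>(r,a)\<leftarrow>succs n p. if r + q = 2*n-1 then \<phi> a x * Kentry n (2*n-1-q) else 0) = \<phi> a x * Kentry n (2*n-1-q)"
    by (rule sum_list_single[OF a succs_distinct[OF n]]) (use q in auto)
  have "(\<Sum>(r,a)\<leftarrow>succs n p. if r + q = 2*n-1 then \<phi> a x * Kentry n r else 0)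
      = (\<Sum>(r,a)\<leftarrow>succs n p. if r + q = 2*n-1 then \<phi> a x * Kentry n (2*n-1-q) else 0)"
  proof (rule arg_cong[where f=sum_list], rule map_cong)
    fix y assume "y \<in> set (succs n p)"
    obtain r b where rb: "y = (r,b)" by force
    show "(case y of (r, a) \<Rightarrow> if r + q = 2*n-1 then \<phi> a x * Kentry n r else 0) =
          (case y of (r, a) \<Rightarrow> if r + q = 2*n-1 then \<phi> a x * Kentry n (2*n-1-q) else 0)"
    proof (cases "r + q = 2*n-1")
      case True then have "r = 2*n-1-q" by arith
      then show ?thesis using rb by simp
    qed (simp add: rb)
  qed simp
  also have "\<dots> = \<phi> a x * Kentry n (2*n-1-q)" by (rule s1)
  finally have e1: "(\<Sum>(r,a)\<leftarrow>succs n p. if r + q = 2*n-1 then \<phi> a x * Kentry n r else 0) = \<phi> a x * Kentry n (2*n-1-q)" .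
  have e2: "(\<Sum>(r,b)\<leftarrow>succs n q. if p + r = 2*n-1 then \<phi> (sperm n b) x * Kentry n p else 0) = \<phi> (sperm n (sperm n a)) x * Kentry n p"
    by (rule sum_list_single[OF a2 succs_distinct[OF n]]) (use p in auto)
  have "1 \<le> a \<and> a \<le> 2*n-2" using succs_prop[OF n a] by simp
  then have "sperm n (sperm n a) = a" by (simp add: sperm_inv)
  moreover have "Kentry n (2*n-1-q) = - Kentry n p" by (rule sym_K[OF n a])
  ultimately show ?thesis using e1 e2 by simp
next
  case False
  have e1: "(\<Sum>(r,a)\<leftarrow>succs n p. if r + q = 2*n-1 then \<phi> a x * Kentry n r else 0) = 0"
  proof (intro sum_list_zero')
    fix y assume y: "y \<in> set (succs n p)"
    obtain r b where rb: "y = (r,b)" by force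
    have "r + q \<noteq> 2*n-1"
    proof
      assume "r + q = 2*n-1"
      then have "r = 2*n-1-q" by arith
      then show False using False y rb by auto
    qed
    then show "(case y of (r, a) \<Rightarrow> if r + q = 2*n-1 then \<phi> a x * Kentry n r else 0) = 0" using rb by simp
  qed
  have e2: "(\<Sum>(r,b)\<leftarrow>succs n q. if p + r = 2*n-1 then \<phi> (sperm n b) x * Kentry n p else 0) = 0"
  proof (intro sum_list_zero')
    fix y assume y: "y \<in> set (succs n q)"
    obtain r b where rb: "y = (r,b)" by force
    show "(case y of (r, b) \<Rightarrow> if p + r = 2*n-1 then \<phi> (sperm n b) x * Kentry n p else 0) = 0"
    proof (cases "p + r = 2*n-1")
      case True
      have "(2*n-1-q, sperm n b) \<in> set (succs n (2*n-1-r))" using sym_edge[OF n, of r b q] y rb by simp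
      moreover have "2*n-1-r = p" using True by simp
      ultimately show ?thesis using False by auto
    qed (simp add: rb)
  qed
  show ?thesis using e1 e2 by simp
qed



definition Nm :: "(nat \<Rightarrow> real \<Rightarrow> complex) \<Rightarrow> nat \<Rightarrow> nat \<Rightarrow> nat \<Rightarrow> real \<Rightarrow> complex" where
  "Nm \<phi> n p q x = (\<Sum>k<2*n. Ym \<phi> n p k x * Kentry n k * Ym (\<lambda>a. \<phi> (sperm n a)) n q (2*n-1-k) x)"

lemma swap_distrib:
  fixes c :: "nat \<Rightarrow> complex"
  shows "(\<Sum>k<N. c k * (\<Sum>r<M. A r * B r k)) = (\<Sum>r<M. A r * (\<Sum>k<N. c k * B r k))"
proof -
  have "(\<Sum>k<N. c k * (\<Sum>r<M. A r * B r k)) = (\<Sum>k<N. \<Sum>r<M. A r * (c k * B r k))"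
    by (simp add: sum_distrib_left algebra_simps)
  also have "\<dots> = (\<Sum>r<M. \<Sum>k<N. A r * (c k * B r k))" by (rule sum.swap)
  also have "\<dots> = (\<Sum>r<M. A r * (\<Sum>k<N. c k * B r k))" by (simp add: sum_distrib_left)
  finally show ?thesis .
qed

lemma N_deriv:
  assumes n: "n \<ge> 3" and cont: "\<And>a. 1 \<le> a \<Longrightarrow> a \<le> 2*n-2 \<Longrightarrow> continuous_on UNIV (\<phi> a)"
  shows "(Nm \<phi> n p q has_vector_derivative
          (\<Sum>r<2*n. Am \<phi> n p r x * Nm \<phi> n r q x) + (\<Sum>r<2*n. Am (\<lambda>a. \<phi> (sperm n a)) n q r x * Nm \<phi> n p r x)) (at x)"
proof -
  let ?\<psi> = "\<lambda>a. \<phi> (sperm n a)"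
  have cont': "continuous_on UNIV (?\<psi> a)" if "1 \<le> a" "a \<le> 2*n-2" for a
    using cont sperm_range[OF that n] by auto
  define DY where "DY k = (\<Sum>r<2*n. Am \<phi> n p r x * Ym \<phi> n r k x)" for k
  define DZ where "DZ k = (\<Sum>r<2*n. Am ?\<psi> n q r x * Ym ?\<psi> n r (2*n-1-k) x)" for k
  have d: "((\<lambda>x. Ym \<phi> n p k x * Kentry n k * Ym ?\<psi> n q (2*n-1-k) x) has_vector_derivative
       (Ym \<phi> n p k x * Kentry n k * DZ k + DY k * Kentry n k * Ym ?\<psi> n q (2*n-1-k) x)) (at x)" for k
    unfolding DY_def DZ_def
    by (intro has_vector_derivative_mult has_vector_derivative_mult_left Ym_deriv_Am[OF n] cont cont')
  have "(Nm \<phi> n p q has_vector_derivative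
       (\<Sum>k<2*n. Ym \<phi> n p k x * Kentry n k * DZ k + DY k * Kentry n k * Ym ?\<psi> n q (2*n-1-k) x)) (at x)"
    unfolding Nm_def[abs_def] using d by (intro has_vector_derivative_sum) auto
  moreover have "(\<Sum>k<2*n. Ym \<phi> n p k x * Kentry n k * DZ k + DY k * Kentry n k * Ym ?\<psi> n q (2*n-1-k) x)
     = (\<Sum>r<2*n. Am \<phi> n p r x * Nm \<phi> n r q x) + (\<Sum>r<2*n. Am ?\<psi> n q r x * Nm \<phi> n p r x)"
  proof -
    have e1: "(\<Sum>k<2*n. Ym \<phi> n p k x * Kentry n k * DZ k) = (\<Sum>r<2*n. Am ?\<psi> n q r x * Nm \<phi> n p r x)"
      unfolding DZ_def Nm_def by (rule swap_distrib)
    have e2: "(\<Sum>k<2*n. DY k * Kentry n k * Ym ?\<psi> n q (2*n-1-k) x) = (\<Sum>r<2*n. Am \<phi> n p r x * Nm \<phi> n r q x)"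
    proof -
      have "(\<Sum>k<2*n. DY k * Kentry n k * Ym ?\<psi> n q (2*n-1-k) x)
          = (\<Sum>k<2*n. (Kentry n k * Ym ?\<psi> n q (2*n-1-k) x) * (\<Sum>r<2*n. Am \<phi> n p r x * Ym \<phi> n r k x))"
        unfolding DY_def by (simp add: algebra_simps)
      also have "\<dots> = (\<Sum>r<2*n. Am \<phi> n p r x * (\<Sum>k<2*n. (Kentry n k * Ym ?\<psi> n q (2*n-1-k) x) * Ym \<phi> n r k x))"
        by (rule swap_distrib)
      also have "\<dots> = (\<Sum>r<2*n. Am \<phi> n p r x * Nm \<phi> n r q x)"
        unfolding Nm_def by (simp add: algebra_simps)
      finally show ?thesis .
    qed
    show ?thesis using e1 e2 by (simp add: sum.distrib)
  qed
  ultimately show ?thesis by simp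
qed

lemma N_const:
  assumes n: "n \<ge> 3" and cont: "\<And>a. 1 \<le> a \<Longrightarrow> a \<le> 2*n-2 \<Longrightarrow> continuous_on UNIV (\<phi> a)"
  shows "p < 2*n \<Longrightarrow> q < 2*n \<Longrightarrow> Nm \<phi> n p q x = (if p + q = 2*n-1 then Kentry n p else 0)"
proof (induction "4*n - (p+q)" arbitrary: p q x rule: less_induct)
  case less
  let ?\<psi> = "\<lambda>a. \<phi> (sperm n a)"
  have z: "(Nm \<phi> n p q has_vector_derivative 0) (at y)" for y
  proof -
    have s1: "(\<Sum>r<2*n. Am \<phi> n p r y * Nm \<phi> n r q y) =
              (\<Sum>(r,a)\<leftarrow>succs n p. if r + q = 2*n-1 then \<phi> a y * Kentry n r else 0)"
    proof -
      have "(\<Sum>r<2*n. Am \<phi> n p r y * Nm \<phi> n r q y) = (\<Sum>(r,a)\<leftarrow>succs n p. \<phi> a y * Nm \<phi> n r q y)"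
        unfolding Am_def by (rule sum_list_to_sum) (auto dest: succs_prop[OF n])
      also have "\<dots> = (\<Sum>(r,a)\<leftarrow>succs n p. if r + q = 2*n-1 then \<phi> a y * Kentry n r else 0)"
      proof (rule arg_cong[where f=sum_list], rule map_cong)
        fix z assume z: "z \<in> set (succs n p)"
        obtain r a where ra: "z = (r,a)" by force
        have "p < r" "r < 2*n" using succs_prop[OF n, of r a p] z ra by auto
        then have "Nm \<phi> n r q y = (if r + q = 2*n-1 then Kentry n r else 0)"
          by (intro less.hyps) (use less.prems in auto)
        then show "(case z of (r, a) \<Rightarrow> \<phi> a y * Nm \<phi> n r q y) =
                   (case z of (r, a) \<Rightarrow> if r + q = 2*n-1 then \<phi> a y * Kentry n r else 0)" using ra by simp
      qed simp
      finally show ?thesis .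
    qed
    have s2: "(\<Sum>r<2*n. Am ?\<psi> n q r y * Nm \<phi> n p r y) =
              (\<Sum>(r,b)\<leftarrow>succs n q. if p + r = 2*n-1 then \<phi> (sperm n b) y * Kentry n p else 0)"
    proof -
      have "(\<Sum>r<2*n. Am ?\<psi> n q r y * Nm \<phi> n p r y) = (\<Sum>(r,b)\<leftarrow>succs n q. ?\<psi> b y * Nm \<phi> n p r y)"
        unfolding Am_def by (rule sum_list_to_sum) (auto dest: succs_prop[OF n])
      also have "\<dots> = (\<Sum>(r,b)\<leftarrow>succs n q. if p + r = 2*n-1 then \<phi> (sperm n b) y * Kentry n p else 0)"
      proof (rule arg_cong[where f=sum_list], rule map_cong)
        fix z assume z: "z \<in> set (succs n q)"
        obtain r a where ra: "z = (r,a)" by force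
        have "q < r" "r < 2*n" using succs_prop[OF n, of r a q] z ra by auto
        then have "Nm \<phi> n p r y = (if p + r = 2*n-1 then Kentry n p else 0)"
          by (intro less.hyps) (use less.prems in auto)
        then show "(case z of (r, b) \<Rightarrow> ?\<psi> b y * Nm \<phi> n p r y) =
                   (case z of (r, b) \<Rightarrow> if p + r = 2*n-1 then \<phi> (sperm n b) y * Kentry n p else 0)" using ra by simp
      qed simp
      finally show ?thesis .
    qed
    have "(\<Sum>r<2*n. Am \<phi> n p r y * Nm \<phi> n r q y) + (\<Sum>r<2*n. Am ?\<psi> n q r y * Nm \<phi> n p r y) = 0"
      unfolding s1 s2 by (rule so_cond[OF n less.prems])
    then show ?thesis using N_deriv[where \<phi>=\<phi> and p=p and q=q and x=y, OF n cont] by simp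
  qed
  obtain c where c: "\<And>y. y \<in> UNIV \<Longrightarrow> Nm \<phi> n p q y = c"
    by (rule has_vector_derivative_zero_constant[of UNIV "Nm \<phi> n p q"]) (use z in auto)
  have "Nm \<phi> n p q 0 = (if p + q = 2*n-1 then Kentry n p else 0)"
  proof -
    have "Nm \<phi> n p q 0 = (\<Sum>k<2*n. if k = p then Kentry n k * (if q = 2*n-1-k then 1 else 0) else 0)"
      unfolding Nm_def Ym_0 by (rule sum.cong) auto
    also have "\<dots> = Kentry n p * (if q = 2*n-1-p then 1 else 0)" using less.prems by simp
    also have "\<dots> = (if p + q = 2*n-1 then Kentry n p else 0)" using less.prems by auto
    finally show ?thesis .
  qed
  then show ?case using c[of x] c[of 0] by simp
qed



fun cc :: "(nat \<Rightarrow> real \<Rightarrow> complex) \<Rightarrow> nat \<Rightarrow> (real \<Rightarrow> complex) \<Rightarrow> nat \<Rightarrow> nat \<Rightarrow> real \<Rightarrow> complex" where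
  "cc \<phi> n f 0 p = (\<lambda>x. if p = 0 then f x else 0)"
| "cc \<phi> n f (Suc i) p = (\<lambda>x. vderiv (cc \<phi> n f i p) x + (\<Sum>r<2*n. cc \<phi> n f i r x * Am \<phi> n r p x))"

lemma Am_smooth:
  assumes n: "n \<ge> 3" and sm: "\<And>a. 1 \<le> a \<Longrightarrow> a \<le> 2*n-2 \<Longrightarrow> smooth (\<phi> a)"
  shows "smooth (Am \<phi> n r p)"
proof -
  define g where "g y = (\<lambda>x. case y of (q,a) \<Rightarrow> if q = p then \<phi> a x else 0)" for y
  have "Am \<phi> n r p = (\<lambda>x. \<Sum>y\<leftarrow>succs n r. g y x)"
    by (simp add: Am_def g_def fun_eq_iff case_prod_unfold)
  moreover have "smooth (\<lambda>x. \<Sum>y\<leftarrow>succs n r. g y x)"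
  proof (rule smooth_sum_list)
    fix y assume y: "y \<in> set (succs n r)"
    obtain q a where qa: "y = (q,a)" by force
    show "smooth (g y)"
    proof (cases "q = p")
      case True
      then have "g y = \<phi> a" by (simp add: g_def qa fun_eq_iff)
      then show ?thesis using succs_prop[OF n, of q a r] y qa sm by simp
    next
      case False
      then have "g y = (\<lambda>x. 0)" by (simp add: g_def qa fun_eq_iff)
      then show ?thesis by (simp add: smooth_const)
    qed
  qed
  ultimately show ?thesis by simp
qed

lemma cc_smooth:
  assumes n: "n \<ge> 3" and sm: "\<And>a. 1 \<le> a \<Longrightarrow> a \<le> 2*n-2 \<Longrightarrow> smooth (\<phi> a)" and f: "smooth f"
  shows "smooth (cc \<phi> n f i p)"
proof (induction i arbitrary: p)
  case 0 then show ?case using f by (cases "p = 0") (auto simp: smooth_const)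
next
  case (Suc i)
  show ?case unfolding cc.simps
    by (intro smooth_add smooth_vderiv Suc smooth_sum smooth_mul Am_smooth[OF n sm]) auto
qed

lemma sum_swap_mult:
  fixes c :: "nat \<Rightarrow> complex"
  shows "(\<Sum>p<N. c p * (\<Sum>q<N. A p q * Y q)) = (\<Sum>q<N. (\<Sum>p<N. c p * A p q) * Y q)"
proof -
  have "(\<Sum>p<N. c p * (\<Sum>q<N. A p q * Y q)) = (\<Sum>p<N. \<Sum>q<N. c p * A p q * Y q)"
    by (simp add: sum_distrib_left algebra_simps)
  also have "\<dots> = (\<Sum>q<N. \<Sum>p<N. c p * A p q * Y q)" by (rule sum.swap)
  also have "\<dots> = (\<Sum>q<N. (\<Sum>p<N. c p * A p q) * Y q)" by (simp add: sum_distrib_right)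
  finally show ?thesis .
qed

lemma hderiv_F:
  assumes n: "n \<ge> 3" and sm: "\<And>a. 1 \<le> a \<Longrightarrow> a \<le> 2*n-2 \<Longrightarrow> smooth (\<phi> a)" and f: "smooth f"
    and k: "k < 2*n"
  shows "hderiv i (\<lambda>x. f x * Ftil n \<phi> k x) = (\<lambda>x. \<Sum>p<2*n. cc \<phi> n f i p x * Ym \<phi> n p k x)"
proof (induction i)
  case 0
  have "(\<Sum>p<2*n. cc \<phi> n f 0 p x * Ym \<phi> n p k x) = f x * Ym \<phi> n 0 k x" for x
  proof -
    have "(\<Sum>p<2*n. cc \<phi> n f 0 p x * Ym \<phi> n p k x) = (\<Sum>p<2*n. if p = 0 then f x * Ym \<phi> n p k x else 0)"
      by (rule sum.cong) auto
    also have "\<dots> = f x * Ym \<phi> n 0 k x" using n by simp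
    finally show ?thesis .
  qed
  then show ?case using Ftil_Ym[OF n k] by (simp add: fun_eq_iff)
next
  case (Suc i)
  have cont: "continuous_on UNIV (\<phi> a)" if "1 \<le> a" "a \<le> 2*n-2" for a
    using sm[OF that] smooth_diff by (auto intro!: continuous_at_imp_continuous_on differentiable_imp_continuous_within)
  have cs: "smooth (cc \<phi> n f i p)" for p by (rule cc_smooth[OF n sm f])
  have "((\<lambda>x. \<Sum>p<2*n. cc \<phi> n f i p x * Ym \<phi> n p k x) has_vector_derivative
     (\<Sum>p<2*n. cc \<phi> n f i p x * (\<Sum>q<2*n. Am \<phi> n p q x * Ym \<phi> n q k x) + vderiv (cc \<phi> n f i p) x * Ym \<phi> n p k x)) (at x)" for x
    by (intro has_vector_derivative_sum has_vector_derivative_mult vderiv_works smooth_diff cs Ym_deriv_Am[OF n cont])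
  then have "vderiv (\<lambda>x. \<Sum>p<2*n. cc \<phi> n f i p x * Ym \<phi> n p k x) x =
     (\<Sum>p<2*n. cc \<phi> n f i p x * (\<Sum>q<2*n. Am \<phi> n p q x * Ym \<phi> n q k x) + vderiv (cc \<phi> n f i p) x * Ym \<phi> n p k x)" for x
    by (rule vderiv_eq)
  also have "(\<Sum>p<2*n. cc \<phi> n f i p x * (\<Sum>q<2*n. Am \<phi> n p q x * Ym \<phi> n q k x) + vderiv (cc \<phi> n f i p) x * Ym \<phi> n p k x)
      = (\<Sum>q<2*n. cc \<phi> n f (Suc i) q x * Ym \<phi> n q k x)" for x
    by (simp add: sum.distrib sum_swap_mult distrib_right)
  finally have eq: "vderiv (\<lambda>x. \<Sum>p<2*n. cc \<phi> n f i p x * Ym \<phi> n p k x) x = (\<Sum>q<2*n. cc \<phi> n f (Suc i) q x * Ym \<phi> n q k x)" for x .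
  show ?case unfolding hderiv_Suc Suc.IH by (rule ext) (rule eq)
qed

definition lev :: "nat \<Rightarrow> nat \<Rightarrow> nat" where "lev n p = (if p < n then p else p - 1)"

lemma Am_nz:
  assumes "Am \<phi> n r p x \<noteq> 0"
  shows "\<exists>a. (p,a) \<in> set (succs n r)"
proof (rule ccontr)
  assume "\<not> ?thesis"
  then have "Am \<phi> n r p x = 0" unfolding Am_def by (intro sum_list_zero') auto
  then show False using assms by simp
qed

lemma succs_lev:
  assumes n: "n \<ge> 3" and e: "(p,a) \<in> set (succs n r)"
  shows "lev n p = Suc (lev n r)"
  using e n unfolding succs_def lev_def
  by (cases "r + 3 \<le> n"; cases "r + 2 = n"; cases "r+1 = n"; cases "r = n"; cases "r + 2 \<le> 2*n") auto

lemma cc_zero: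
  assumes n: "n \<ge> 3"
  shows "p < 2*n \<Longrightarrow> i < lev n p \<Longrightarrow> cc \<phi> n f i p x = 0"
proof (induction i arbitrary: p x)
  case 0 then show ?case by (auto simp: lev_def split: if_splits)
next
  case (Suc i)
  have z: "cc \<phi> n f i p = (\<lambda>x. 0)" using Suc by (auto simp: fun_eq_iff)
  have "cc \<phi> n f i r x * Am \<phi> n r p x = 0" if "r < 2*n" for r
  proof (cases "Am \<phi> n r p x = 0")
    case False
    then obtain a where "(p,a) \<in> set (succs n r)" using Am_nz by blast
    then have "lev n p = Suc (lev n r)" by (rule succs_lev[OF n])
    then show ?thesis using Suc.IH[of r x] that Suc.prems by simp
  qed simp
  then have "(\<Sum>r<2*n. cc \<phi> n f i r x * Am \<phi> n r p x) = 0" by (intro sum.neutral) auto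
  then show ?case using z by (simp add: vderiv_def)
qed

definition pr :: "(nat \<Rightarrow> real \<Rightarrow> complex) \<Rightarrow> nat \<Rightarrow> nat \<Rightarrow> real \<Rightarrow> complex" where
  "pr \<phi> n p x = (if p \<le> n - 1 then (\<Prod>a\<in>{1..p}. \<phi> a x) else (\<Prod>a\<in>{1..n-2}. \<phi> a x) * \<phi> n x)"

lemma Am_pred1:
  assumes n: "n \<ge> 3" and p: "1 \<le> p" "p \<le> n - 1"
  shows "Am \<phi> n r p x = (if r = p - 1 then \<phi> p x else 0)"
  using n p unfolding Am_def succs_def
  by (cases "r + 3 \<le> n"; cases "r + 2 = n"; cases "r+1 = n"; cases "r = n"; cases "r + 2 \<le> 2*n") auto

lemma Am_pred2:
  assumes n: "n \<ge> 3"
  shows "Am \<phi> n r n x = (if r = n - 2 then \<phi> n x else 0)"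
  using n unfolding Am_def succs_def
  by (cases "r + 3 \<le> n"; cases "r + 2 = n"; cases "r+1 = n"; cases "r = n"; cases "r + 2 \<le> 2*n") auto

lemma sum_pick:
  fixes c :: "nat \<Rightarrow> complex"
  shows "t < N \<Longrightarrow> (\<Sum>r<N. c r * (if r = t then v else 0)) = c t * v"
proof -
  assume t: "t < N"
  have "(\<Sum>r<N. c r * (if r = t then v else 0)) = (\<Sum>r<N. if r = t then c r * v else 0)"
    by (rule sum.cong) auto
  also have "\<dots> = c t * v" using t by simp
  finally show ?thesis .
qed

lemma cc_top:
  assumes n: "n \<ge> 3"
  shows "i \<le> n - 1 \<Longrightarrow> p \<le> n \<Longrightarrow> lev n p = i \<Longrightarrow> cc \<phi> n f i p x = f x * pr \<phi> n p x"
proof (induction i arbitrary: p x)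
  case 0
  then have "p = 0" using n by (auto simp: lev_def split: if_splits)
  then show ?case by (simp add: pr_def)
next
  case (Suc i)
  have z: "cc \<phi> n f i p = (\<lambda>x. 0)" using Suc.prems n by (auto simp: fun_eq_iff intro!: cc_zero)
  show ?case
  proof (cases "p < n")
    case True
    then have pp: "p = Suc i" "1 \<le> p" "p \<le> n - 1" using Suc.prems by (auto simp: lev_def)
    have "(\<Sum>r<2*n. cc \<phi> n f i r x * Am \<phi> n r p x) = cc \<phi> n f i i x * \<phi> p x"
      using Am_pred1[OF n pp(2,3)] pp n by (simp add: sum_pick)
    also have "cc \<phi> n f i i x = f x * pr \<phi> n i x"
      using Suc.prems pp by (intro Suc.IH) (auto simp: lev_def)
    finally have e: "(\<Sum>r<2*n. cc \<phi> n f i r x * Am \<phi> n r p x) = f x * pr \<phi> n i x * \<phi> p x" .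
    have "pr \<phi> n p x = pr \<phi> n i x * \<phi> p x" using pp by (simp add: pr_def)
    then show ?thesis using e z by (simp add: vderiv_def)
  next
    case False
    then have pp: "p = n" "i = n - 2" using Suc.prems by (auto simp: lev_def)
    have "(\<Sum>r<2*n. cc \<phi> n f i r x * Am \<phi> n r p x) = cc \<phi> n f i (n-2) x * \<phi> n x"
      using Am_pred2[OF n] pp n by (simp add: sum_pick)
    also have "cc \<phi> n f i (n-2) x = f x * pr \<phi> n (n-2) x"
      using Suc.prems pp n by (intro Suc.IH) (auto simp: lev_def)
    finally have e: "(\<Sum>r<2*n. cc \<phi> n f i r x * Am \<phi> n r p x) = f x * pr \<phi> n (n-2) x * \<phi> n x" .
    have "n-2 \<le> n-1" "\<not> n \<le> n-1" using n by arith+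
    then have "pr \<phi> n p x = pr \<phi> n (n-2) x * \<phi> n x" using pp by (simp add: pr_def)
    then show ?thesis using e z by (simp add: vderiv_def)
  qed
qed



lemma triple:
  fixes c d K :: "nat \<Rightarrow> complex"
  shows "(\<Sum>k<N. (\<Sum>p<N. c p * Y p k) * K k * (\<Sum>q<N. d q * Z q k)) =
         (\<Sum>p<N. \<Sum>q<N. c p * d q * (\<Sum>k<N. Y p k * K k * Z q k))"
proof -
  have "(\<Sum>k<N. (\<Sum>p<N. c p * Y p k) * K k * (\<Sum>q<N. d q * Z q k)) =
        (\<Sum>k<N. \<Sum>p<N. \<Sum>q<N. c p * d q * (Y p k * K k * Z q k))"
    by (simp add: sum_distrib_left sum_distrib_right algebra_simps)
  also have "\<dots> = (\<Sum>p<N. \<Sum>k<N. \<Sum>q<N. c p * d q * (Y p k * K k * Z q k))" by (rule sum.swap)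
  also have "\<dots> = (\<Sum>p<N. \<Sum>q<N. \<Sum>k<N. c p * d q * (Y p k * K k * Z q k))"
    by (rule sum.cong[OF refl], rule sum.swap)
  also have "\<dots> = (\<Sum>p<N. \<Sum>q<N. c p * d q * (\<Sum>k<N. Y p k * K k * Z q k))"
    by (simp add: sum_distrib_left)
  finally show ?thesis .
qed

lemma lev_sum: "n \<ge> 1 \<Longrightarrow> p < 2*n \<Longrightarrow> lev n p + lev n (2*n-1-p) = 2*n-2"
  by (auto simp: lev_def)

theorem proposition5p8:
  fixes n :: nat and \<phi> :: "nat \<Rightarrow> real \<Rightarrow> complex" and f0 :: "real \<Rightarrow> complex"
    and F sF :: "nat \<Rightarrow> real \<Rightarrow> complex"
  assumes "n \<ge> 3"
    and "\<forall>a\<in>{1..2*n-2}. \<forall>x. \<phi> a x \<noteq> 0"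
    and "\<forall>a\<in>{1..2*n-2}. \<forall>k x. hderiv k (\<phi> a) differentiable (at x)"
    and "continuous_on UNIV f0"
    and "\<forall>x. f0 x ^ 2 * (\<Prod>a\<in>{1..2*n-2}. \<phi> a x) = 1"
    and "F = (\<lambda>k x. f0 x * Ftil n \<phi> k x)"
    and "sF = (\<lambda>k x. f0 x * Ftil n (\<lambda>a. \<phi> (sperm n a)) k x)"
  shows "(\<forall>i j x. i \<le> n - 1 \<and> j \<le> n - 1 \<and> i + j < 2*n - 2 \<longrightarrow>
            (\<Sum>k<2*n. hderiv i (F k) x * Kentry n k * hderiv j (sF (2*n - 1 - k)) x) = 0)
       \<and> (\<forall>x. (\<Sum>k<2*n. hderiv (n-1) (F k) x * Kentry n k * hderiv (n-1) (sF (2*n - 1 - k)) x)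
               = 2 * (-1) ^ (n - 1))"
proof -
  note n = assms(1)
  let ?\<psi> = "\<lambda>a. \<phi> (sperm n a)"
  have sm: "smooth (\<phi> a)" if "1 \<le> a" "a \<le> 2*n-2" for a
    using assms(3) that by (auto simp: smooth_def)
  have sm': "smooth (?\<psi> a)" if "1 \<le> a" "a \<le> 2*n-2" for a
    using sm sperm_range[OF that n] by auto
  have cont: "continuous_on UNIV (\<phi> a)" if "1 \<le> a" "a \<le> 2*n-2" for a
    using sm[OF that] smooth_diff by (auto intro!: continuous_at_imp_continuous_on differentiable_imp_continuous_within)
  define P where "P = (\<lambda>x. \<Prod>a\<in>{1..2*n-2}. \<phi> a x)"
  have Ps: "smooth P" unfolding P_def by (rule smooth_prod) (auto intro: sm)
  have Pnz: "P x \<noteq> 0" for x unfolding P_def using assms(2) by auto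
  have f0s: "smooth f0"
    by (rule sqrt_root_smooth[OF Ps Pnz assms(4)]) (use assms(5) in \<open>auto simp: P_def\<close>)
  have HF: "hderiv i (F k) = (\<lambda>x. \<Sum>p<2*n. cc \<phi> n f0 i p x * Ym \<phi> n p k x)" if "k < 2*n" for i k
    unfolding assms(6) by (rule hderiv_F[OF n sm f0s that])
  have HS: "hderiv j (sF k) = (\<lambda>x. \<Sum>q<2*n. cc ?\<psi> n f0 j q x * Ym ?\<psi> n q k x)" if "k < 2*n" for j k
    unfolding assms(7) by (rule hderiv_F[OF n sm' f0s that])
  have Q: "(\<Sum>k<2*n. hderiv i (F k) x * Kentry n k * hderiv j (sF (2*n - 1 - k)) x)
        = (\<Sum>p<2*n. cc \<phi> n f0 i p x * cc ?\<psi> n f0 j (2*n-1-p) x * Kentry n p)" for i j x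
  proof -
    have "(\<Sum>k<2*n. hderiv i (F k) x * Kentry n k * hderiv j (sF (2*n - 1 - k)) x)
        = (\<Sum>k<2*n. (\<Sum>p<2*n. cc \<phi> n f0 i p x * Ym \<phi> n p k x) * Kentry n k *
              (\<Sum>q<2*n. cc ?\<psi> n f0 j q x * Ym ?\<psi> n q (2*n-1-k) x))"
      by (rule sum.cong[OF refl]) (simp add: HF HS)
    also have "\<dots> = (\<Sum>p<2*n. \<Sum>q<2*n. cc \<phi> n f0 i p x * cc ?\<psi> n f0 j q x * Nm \<phi> n p q x)"
      unfolding Nm_def by (rule triple)
    also have "\<dots> = (\<Sum>p<2*n. cc \<phi> n f0 i p x * cc ?\<psi> n f0 j (2*n-1-p) x * Kentry n p)"
    proof (rule sum.cong[OF refl])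
      fix p assume p: "p \<in> {..<2*n}"
      have "(\<Sum>q<2*n. cc \<phi> n f0 i p x * cc ?\<psi> n f0 j q x * Nm \<phi> n p q x)
          = (\<Sum>q<2*n. if q = 2*n-1-p then cc \<phi> n f0 i p x * cc ?\<psi> n f0 j q x * Kentry n p else 0)"
      proof (rule sum.cong[OF refl])
        fix q assume q: "q \<in> {..<2*n}"
        have "Nm \<phi> n p q x = (if p + q = 2*n-1 then Kentry n p else 0)"
          using N_const[OF n cont] p q by auto
        moreover have "p + q = 2*n-1 \<longleftrightarrow> q = 2*n-1-p" using p q by auto
        ultimately show "cc \<phi> n f0 i p x * cc ?\<psi> n f0 j q x * Nm \<phi> n p q x =
          (if q = 2*n-1-p then cc \<phi> n f0 i p x * cc ?\<psi> n f0 j q x * Kentry n p else 0)" by simp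
      qed
      also have "\<dots> = cc \<phi> n f0 i p x * cc ?\<psi> n f0 j (2*n-1-p) x * Kentry n p"
        using p n by (subst sum.delta) auto
      finally show "(\<Sum>q<2*n. cc \<phi> n f0 i p x * cc ?\<psi> n f0 j q x * Nm \<phi> n p q x)
          = cc \<phi> n f0 i p x * cc ?\<psi> n f0 j (2*n-1-p) x * Kentry n p" .
    qed
    finally show ?thesis .
  qed
  have part1: "(\<Sum>k<2*n. hderiv i (F k) x * Kentry n k * hderiv j (sF (2*n - 1 - k)) x) = 0"
    if ij: "i + j < 2*n - 2" for i j x
  proof -
    have "cc \<phi> n f0 i p x * cc ?\<psi> n f0 j (2*n-1-p) x * Kentry n p = 0" if p: "p < 2*n" for p
    proof -
      have "i < lev n p \<or> j < lev n (2*n-1-p)" using lev_sum[of n p] n p ij by linarith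
      then show ?thesis using cc_zero[OF n] p by auto
    qed
    then show ?thesis unfolding Q by (intro sum.neutral) auto
  qed
  have part2: "(\<Sum>k<2*n. hderiv (n-1) (F k) x * Kentry n k * hderiv (n-1) (sF (2*n - 1 - k)) x) = 2 * (-1) ^ (n - 1)" for x
  proof -
    define t where "t p = cc \<phi> n f0 (n-1) p x * cc ?\<psi> n f0 (n-1) (2*n-1-p) x * Kentry n p" for p
    have "(\<Sum>p<2*n. t p) = (\<Sum>p\<in>{n-1,n}. t p)"
    proof (rule sum.mono_neutral_right)
      show "\<forall>p\<in>{..<2*n} - {n-1,n}. t p = 0"
      proof
        fix p assume p: "p \<in> {..<2*n} - {n-1,n}"
        have "lev n p \<noteq> n - 1" using p n by (auto simp: lev_def)
        then have "n - 1 < lev n p \<or> n - 1 < lev n (2*n-1-p)" using lev_sum[of n p] n p by auto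
        then show "t p = 0" unfolding t_def using cc_zero[OF n] p by auto
      qed
    qed (use n in auto)
    also have "\<dots> = t (n-1) + t n" using n by simp
    finally have s: "(\<Sum>p<2*n. t p) = t (n-1) + t n" .
    define A where "A = (\<Prod>a\<in>{1..n-2}. \<phi> a x)"
    define B where "B = (\<Prod>a\<in>{1..n-2}. ?\<psi> a x)"
    have B: "B = (\<Prod>a\<in>{n+1..2*n-2}. \<phi> a x)"
      unfolding B_def
    proof (rule prod.reindex_bij_witness[where i="\<lambda>a. 2*n-1-a" and j="\<lambda>a. 2*n-1-a"])
      fix a assume "a \<in> {1..n-2}"
      then show "2*n-1-(2*n-1-a) = a" "2*n-1-a \<in> {n+1..2*n-2}" "\<phi> (2*n-1-a) x = ?\<psi> a x"
        using n by (auto simp: sperm_def)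
    next
      fix b assume "b \<in> {n+1..2*n-2}"
      then show "2*n-1-(2*n-1-b) = b" "2*n-1-b \<in> {1..n-2}" using n by auto
    qed
    have Pdec: "P x = A * \<phi> (n-1) x * \<phi> n x * B"
    proof -
      have "P x = (\<Prod>a\<in>{1..n + (n-2)}. \<phi> a x)" using n by (simp add: P_def mult_2)
      also have "\<dots> = (\<Prod>a\<in>{1..n}. \<phi> a x) * (\<Prod>a\<in>{n+1..n+(n-2)}. \<phi> a x)"
        by (rule prod.ub_add_nat) simp
      also have "(\<Prod>a\<in>{1..n}. \<phi> a x) = A * \<phi> (n-1) x * \<phi> n x"
      proof -
        have "n = Suc (Suc (n-2))" "n - 1 = Suc (n-2)" using n by arith+
        then have "(\<Prod>a\<in>{1..n}. \<phi> a x) = (\<Prod>a\<in>{1..Suc (Suc (n-2))}. \<phi> a x)" "\<phi> (n-1) x = \<phi> (Suc (n-2)) x"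
          "\<phi> n x = \<phi> (Suc (Suc (n-2))) x" by metis+
        then show ?thesis unfolding A_def using n by simp
      qed
      also have "n + (n-2) = 2*n-2" using n by simp
      finally show ?thesis using B by simp
    qed
    have f0P: "f0 x ^ 2 * P x = 1" using assms(5) by (simp add: P_def)
    have K1: "Kentry n (n-1) = (-1)^(n-1)" using n by (simp add: Kentry_def)
    have K2: "Kentry n n = (-1)^(n-1)" using n by (simp add: Kentry_def)
    have ps: "sperm n (n-1) = n-1" "sperm n n = n" by (auto simp: sperm_def)
    have le: "n - 1 \<le> n - 1" "n \<le> n" "lev n (n-1) = n-1" "lev n n = n - 1" "\<not> n \<le> n - 1" using n by (auto simp: lev_def)
    have c1: "cc \<phi> n f0 (n-1) (n-1) x = f0 x * (A * \<phi> (n-1) x)"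
    proof -
      have "cc \<phi> n f0 (n-1) (n-1) x = f0 x * pr \<phi> n (n-1) x" using le by (intro cc_top[OF n]) auto
      moreover have "pr \<phi> n (n-1) x = A * \<phi> (n-1) x"
      proof -
        have "n - 1 = Suc (n-2)" using n by arith
        then have "(\<Prod>a\<in>{1..n-1}. \<phi> a x) = (\<Prod>a\<in>{1..Suc (n-2)}. \<phi> a x)" "\<phi> (n-1) x = \<phi> (Suc (n-2)) x" by metis+
        then show ?thesis unfolding pr_def A_def by simp
      qed
      ultimately show ?thesis by simp
    qed
    have d1: "cc ?\<psi> n f0 (n-1) (n-1) x = f0 x * (B * \<phi> (n-1) x)"
    proof -
      have "cc ?\<psi> n f0 (n-1) (n-1) x = f0 x * pr ?\<psi> n (n-1) x" using le by (intro cc_top[OF n]) auto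
      moreover have "pr ?\<psi> n (n-1) x = B * \<phi> (n-1) x"
      proof -
        have "n - 1 = Suc (n-2)" using n by arith
        then have "(\<Prod>a\<in>{1..n-1}. ?\<psi> a x) = (\<Prod>a\<in>{1..Suc (n-2)}. ?\<psi> a x)" "?\<psi> (n-1) x = ?\<psi> (Suc (n-2)) x" by metis+
        then show ?thesis unfolding pr_def B_def using ps by simp
      qed
      ultimately show ?thesis by simp
    qed
    have c2: "cc \<phi> n f0 (n-1) n x = f0 x * (A * \<phi> n x)"
      using cc_top[OF n, of "n-1" n \<phi> f0 x] le by (simp add: pr_def A_def)
    have d2: "cc ?\<psi> n f0 (n-1) n x = f0 x * (B * \<phi> n x)"
      using cc_top[OF n, of "n-1" n ?\<psi> f0 x] le ps by (simp add: pr_def B_def)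
    have i1: "2*n-1-(n-1) = n" "2*n-1-n = n-1" using n by auto
    have "t (n-1) = f0 x ^ 2 * P x * (-1)^(n-1)"
      unfolding t_def i1 c1 d2 K1 Pdec by (simp add: power2_eq_square algebra_simps)
    moreover have "t n = f0 x ^ 2 * P x * (-1)^(n-1)"
      unfolding t_def i1 c2 d1 K2 Pdec by (simp add: power2_eq_square algebra_simps)
    ultimately have "t (n-1) + t n = 2 * (-1)^(n-1)" using f0P by simp
    then show ?thesis unfolding Q using s t_def by simp
  qed
  show ?thesis using part1 part2 by auto
qed

end
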